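(* Let $G$ be a graph of order $n\ge 9$. If $\tau(G)\le\frac{n}{2}$ and ${\rm diam}(G)=3$, then $\beta_p(G)\le n-3$.
   Context: All graphs are finite, simple, undirected and connected. Two vertices $u,v$ are twins if $N(u)\setminus\{v\}=N(v)\setminus\{u\}$; the twin number $\tau(G)$ is the maximum cardinality of an equivalence class of the twin relation. For a partition $\Pi=\{S_1,\dots,S_k\}$ of $V(G)$, $r(u|\Pi)=(d(u,S_1),\dots,d(u,S_k))$ with $d(u,S)=\min_{w\in S}d(u,w)$; $\Pi$ is locating if $r(u|\Pi)\ne r(v|\Pi)$ for all distinct $u,v$; $\beta_p(G)$ is the minimum size of a locating partition. *)

theory Defs
  imports Complex_Main "HOL-Library.Disjoint_Sets"
begin

definition edges :: "('a \<Rightarrow> 'a \<Rightarrow> bool) \<Rightarrow> ('a \<times> 'a) set" where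
  "edges E = {(u, v). E u v}"

definition simple_graph :: "'a set \<Rightarrow> ('a \<Rightarrow> 'a \<Rightarrow> bool) \<Rightarrow> bool" where
  "simple_graph V E \<longleftrightarrow> finite V \<and> V \<noteq> {} \<and>
     (\<forall>u v. E u v \<longrightarrow> u \<in> V \<and> v \<in> V) \<and>
     (\<forall>u v. E u v \<longrightarrow> E v u) \<and> (\<forall>u. \<not> E u u)"

definition connected_graph :: "'a set \<Rightarrow> ('a \<Rightarrow> 'a \<Rightarrow> bool) \<Rightarrow> bool" where
  "connected_graph V E \<longleftrightarrow> (\<forall>u\<in>V. \<forall>v\<in>V. (u, v) \<in> (edges E)\<^sup>*)"

definition gdist :: "('a \<Rightarrow> 'a \<Rightarrow> bool) \<Rightarrow> 'a \<Rightarrow> 'a \<Rightarrow> nat" where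
  "gdist E u v = (LEAST k. (u, v) \<in> (edges E) ^^ k)"

definition diam :: "'a set \<Rightarrow> ('a \<Rightarrow> 'a \<Rightarrow> bool) \<Rightarrow> nat" where
  "diam V E = Max {gdist E u v | u v. u \<in> V \<and> v \<in> V}"

definition nbhd :: "('a \<Rightarrow> 'a \<Rightarrow> bool) \<Rightarrow> 'a \<Rightarrow> 'a set" where
  "nbhd E u = {w. E u w}"

definition twins :: "('a \<Rightarrow> 'a \<Rightarrow> bool) \<Rightarrow> 'a \<Rightarrow> 'a \<Rightarrow> bool" where
  "twins E u v \<longleftrightarrow> nbhd E u - {v} = nbhd E v - {u}"

definition twin_class :: "'a set \<Rightarrow> ('a \<Rightarrow> 'a \<Rightarrow> bool) \<Rightarrow> 'a \<Rightarrow> 'a set" where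
  "twin_class V E u = {v \<in> V. twins E u v}"

definition twin_number :: "'a set \<Rightarrow> ('a \<Rightarrow> 'a \<Rightarrow> bool) \<Rightarrow> nat" where
  "twin_number V E = Max ((\<lambda>u. card (twin_class V E u)) ` V)"

definition set_dist :: "('a \<Rightarrow> 'a \<Rightarrow> bool) \<Rightarrow> 'a \<Rightarrow> 'a set \<Rightarrow> nat" where
  "set_dist E u S = Min ((\<lambda>w. gdist E u w) ` S)"

text \<open>Locating partition: the representation vectors r(u|P) (one coordinate per
  class) are pairwise distinct, i.e. distinct vertices differ in the distance to some class.\<close>
definition locating_partition :: "'a set \<Rightarrow> ('a \<Rightarrow> 'a \<Rightarrow> bool) \<Rightarrow> 'a set set \<Rightarrow> bool" where
  "locating_partition V E P \<longleftrightarrow> partition_on V P \<and>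
     (\<forall>u\<in>V. \<forall>v\<in>V. u \<noteq> v \<longrightarrow> (\<exists>S\<in>P. set_dist E u S \<noteq> set_dist E v S))"

definition partition_dim :: "'a set \<Rightarrow> ('a \<Rightarrow> 'a \<Rightarrow> bool) \<Rightarrow> nat" where
  "partition_dim V E = (LEAST k. \<exists>P. locating_partition V E P \<and> card P = k)"

end

theory Submission
  imports Defs
begin

lemma walk_sym:
  assumes "\<forall>u v. E u v \<longrightarrow> E v u"
  shows "(u, v) \<in> edges E ^^ k \<Longrightarrow> (v, u) \<in> edges E ^^ k"
proof (induction k arbitrary: u v)
  case 0 then show ?case by (auto elim: relpow_0_E)
next
  case (Suc k)
  from relpow_Suc_D2[OF Suc.prems] obtain y where "(u,y) \<in> edges E" "(y,v) \<in> edges E ^^ k" by blast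
  then have "(v,y) \<in> edges E ^^ k" "(y,u) \<in> edges E" using Suc.IH assms by (auto simp: edges_def)
  then show ?case by (meson relpow_Suc_I)
qed

context
  fixes V :: "'a set" and E :: "'a \<Rightarrow> 'a \<Rightarrow> bool"
  assumes sg: "simple_graph V E" and cg: "connected_graph V E"
begin

lemma walk_ex: "u \<in> V \<Longrightarrow> v \<in> V \<Longrightarrow> \<exists>k. (u, v) \<in> edges E ^^ k"
  using cg by (auto simp: connected_graph_def rtrancl_power)

lemma gdist_walk: "u \<in> V \<Longrightarrow> v \<in> V \<Longrightarrow> (u, v) \<in> edges E ^^ gdist E u v"
  unfolding gdist_def by (rule LeastI_ex[OF walk_ex])

lemma gdist_le: "(u, v) \<in> edges E ^^ k \<Longrightarrow> gdist E u v \<le> k"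
  unfolding gdist_def by (rule Least_le)

lemma gdist_self[simp]: "gdist E u u = 0"
  unfolding gdist_def by (rule Least_eq_0) (rule relpow_0_I)

lemma gdist_sym: "u \<in> V \<Longrightarrow> v \<in> V \<Longrightarrow> gdist E u v = gdist E v u"
proof -
  have s: "\<forall>u v. E u v \<longrightarrow> E v u" using sg by (simp add: simple_graph_def)
  assume "u \<in> V" "v \<in> V"
  then have "gdist E v u \<le> gdist E u v" "gdist E u v \<le> gdist E v u"
    using gdist_le walk_sym[OF s] gdist_walk by blast+
  then show ?thesis by simp
qed

lemma gdist_0: "u \<in> V \<Longrightarrow> v \<in> V \<Longrightarrow> gdist E u v = 0 \<longleftrightarrow> u = v"
  using gdist_walk[of u v] by (auto elim: relpow_0_E)

lemma gdist_tri: "u \<in> V \<Longrightarrow> v \<in> V \<Longrightarrow> w \<in> V \<Longrightarrow> gdist E u w \<le> gdist E u v + gdist E v w"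
proof -
  assume "u \<in> V" "v \<in> V" "w \<in> V"
  then have "(u, w) \<in> edges E ^^ (gdist E u v + gdist E v w)"
    using gdist_walk relpow_add by blast
  then show ?thesis by (rule gdist_le)
qed

lemma gdist_1: "u \<in> V \<Longrightarrow> v \<in> V \<Longrightarrow> gdist E u v = 1 \<longleftrightarrow> E u v"
proof
  assume "u \<in> V" "v \<in> V" "gdist E u v = 1"
  then show "E u v" using gdist_walk[of u v] by (simp add: edges_def)
next
  assume a: "u \<in> V" "v \<in> V" "E u v"
  then have "u \<noteq> v" using sg by (auto simp: simple_graph_def)
  moreover have "gdist E u v \<le> 1" using a by (intro gdist_le) (simp add: edges_def)
  ultimately show "gdist E u v = 1" using gdist_0 a by fastforce
qed

lemma gdist_step:
  assumes "u \<in> V" "v \<in> V" "gdist E u v = Suc k"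
  shows "\<exists>w\<in>V. E u w \<and> gdist E w v = k"
proof -
  from gdist_walk[OF assms(1,2)] assms(3) obtain w where w: "(u,w) \<in> edges E" "(w,v) \<in> edges E ^^ k"
    using relpow_Suc_D2 by metis
  then have "E u w" "w \<in> V" using sg by (auto simp: edges_def simple_graph_def)
  moreover have "gdist E w v \<le> k" using w gdist_le by blast
  moreover have "gdist E u w = 1" using gdist_1 \<open>E u w\<close> \<open>w\<in>V\<close> assms by blast
  moreover have "gdist E u v \<le> gdist E u w + gdist E w v" using gdist_tri assms \<open>w\<in>V\<close> by blast
  ultimately show ?thesis using assms by force
qed

lemma finV: "finite V" using sg by (simp add: simple_graph_def)

lemma setdist_single[simp]: "set_dist E u {w} = gdist E u w"
  by (simp add: set_dist_def)

lemma setdist_in: "finite S \<Longrightarrow> u \<in> S \<Longrightarrow> set_dist E u S = 0"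
  unfolding set_dist_def by (metis (mono_tags, lifting) Min_eqI finite_imageI gdist_self image_eqI le0)

lemma setdist_pos: "finite S \<Longrightarrow> S \<noteq> {} \<Longrightarrow> S \<subseteq> V \<Longrightarrow> u \<in> V \<Longrightarrow> u \<notin> S \<Longrightarrow> set_dist E u S \<noteq> 0"
proof -
  assume a: "finite S" "S \<noteq> {}" "S \<subseteq> V" "u \<in> V" "u \<notin> S"
  then have "Min ((\<lambda>w. gdist E u w) ` S) \<in> (\<lambda>w. gdist E u w) ` S" by (intro Min_in) auto
  then obtain w where "w \<in> S" "set_dist E u S = gdist E u w" by (auto simp: set_dist_def)
  then show ?thesis using a gdist_0[of u w] by auto
qed

lemma loc_part:
  assumes Q1: "\<And>C. C \<in> Q \<Longrightarrow> C \<subseteq> V \<and> C \<noteq> {}"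
    and Q2: "\<And>C C'. C \<in> Q \<Longrightarrow> C' \<in> Q \<Longrightarrow> C \<noteq> C' \<Longrightarrow> C \<inter> C' = {}"
    and Q3: "\<And>C x y. C \<in> Q \<Longrightarrow> x \<in> C \<Longrightarrow> y \<in> C \<Longrightarrow> x \<noteq> y \<Longrightarrow> \<exists>w\<in>V - \<Union>Q. gdist E x w \<noteq> gdist E y w"
  shows "partition_dim V E \<le> card Q + card (V - \<Union>Q)"
proof -
  define P where "P = Q \<union> (\<lambda>w. {w}) ` (V - \<Union>Q)"
  have PV: "\<And>S. S \<in> P \<Longrightarrow> S \<subseteq> V \<and> S \<noteq> {} \<and> finite S"
    using Q1 finV P_def by (auto intro: finite_subset)
  have cov: "\<And>u. u \<in> V \<Longrightarrow> \<exists>S\<in>P. u \<in> S" unfolding P_def by auto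
  have dis: "\<And>S S'. S \<in> P \<Longrightarrow> S' \<in> P \<Longrightarrow> S \<noteq> S' \<Longrightarrow> S \<inter> S' = {}"
    unfolding P_def using Q2 by blast
  have part: "partition_on V P"
    unfolding partition_on_def disjoint_def using PV cov dis by blast
  have loc: "\<forall>u\<in>V. \<forall>v\<in>V. u \<noteq> v \<longrightarrow> (\<exists>S\<in>P. set_dist E u S \<noteq> set_dist E v S)"
  proof (intro ballI impI)
    fix u v assume uv: "u \<in> V" "v \<in> V" "u \<noteq> v"
    obtain S where S: "S \<in> P" "u \<in> S" using cov uv by blast
    show "\<exists>S\<in>P. set_dist E u S \<noteq> set_dist E v S"
    proof (cases "v \<in> S")
      case False
      then show ?thesis using S setdist_in setdist_pos PV uv by metis
    next
      case True
      then have "S \<in> Q" using S uv P_def by auto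
      then obtain w where "w \<in> V - \<Union>Q" "gdist E u w \<noteq> gdist E v w" using Q3 S True uv by blast
      then show ?thesis unfolding P_def by (intro bexI[of _ "{w}"]) auto
    qed
  qed
  have "partition_dim V E \<le> card P"
    unfolding partition_dim_def using part loc by (intro Least_le) (auto simp: locating_partition_def)
  also have "card P \<le> card Q + card ((\<lambda>w. {w}) ` (V - \<Union>Q))" unfolding P_def by (rule card_Un_le)
  also have "\<dots> \<le> card Q + card (V - \<Union>Q)" using card_image_le finV by auto
  finally show ?thesis .
qed

lemma twin_le:
  assumes "x \<in> V" "\<forall>y\<in>R. twins E x y" "R \<subseteq> V"
  shows "card R \<le> twin_number V E"
proof -
  have "R \<subseteq> twin_class V E x" using assms by (auto simp: twin_class_def)
  then have "card R \<le> card (twin_class V E x)" using finV by (intro card_mono) (auto simp: twin_class_def)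
  also have "\<dots> \<le> twin_number V E" unfolding twin_number_def using finV assms(1) by (intro Max_ge) auto
  finally show ?thesis .
qed

lemma main:
  assumes n9: "card V \<ge> 9"
    and tw: "real (twin_number V E) \<le> real (card V) / 2"
    and dm: "diam V E = 3"
  shows "partition_dim V E \<le> card V - 3"
proof -
  let ?D = "{gdist E u v | u v. u \<in> V \<and> v \<in> V}"
  have Deq: "?D = (\<lambda>(u,v). gdist E u v) ` (V \<times> V)" by auto
  have finD: "finite ?D" unfolding Deq using finV by auto
  have neD: "?D \<noteq> {}"
  proof -
    obtain v where "v \<in> V" using sg unfolding simple_graph_def by blast
    then show ?thesis by blast
  qed
  have le3: "gdist E u v \<le> 3" if "u \<in> V" "v \<in> V" for u v
  proof -
    have "gdist E u v \<in> ?D" using that by blast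
    then show ?thesis using dm Max_ge[OF finD] unfolding diam_def by simp
  qed
  have "3 \<in> ?D" using Max_in[OF finD neD] dm unfolding diam_def by simp
  then have "\<exists>u v. u \<in> V \<and> v \<in> V \<and> gdist E u v = 3" by auto
  then obtain u0 u3 where u03: "u0 \<in> V" "u3 \<in> V" "gdist E u0 u3 = 3" by blast
  then obtain u1 where u1: "u1 \<in> V" "E u0 u1" "gdist E u1 u3 = 2"
    using gdist_step[of u0 u3 2] by auto
  then obtain u2 where u2: "u2 \<in> V" "E u1 u2" "gdist E u2 u3 = 1"
    using gdist_step[of u1 u3 1] u03 by auto
  have d01: "gdist E u0 u1 = 1" using gdist_1 u1 u03 by blast
  have d12: "gdist E u1 u2 = 1" using gdist_1 u1 u2 by blast
  have d02a: "gdist E u0 u2 \<le> 2" using gdist_tri[of u0 u1 u2] d01 d12 u1 u2 u03 by simp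
  have d02b: "gdist E u0 u3 \<le> gdist E u0 u2 + gdist E u2 u3" using gdist_tri u1 u2 u03 by blast
  have d02: "gdist E u0 u2 = 2" using d02a d02b u03 u2 by simp
  have dd: "gdist E u0 u1 = 1" "gdist E u1 u0 = 1" "gdist E u1 u2 = 1" "gdist E u2 u1 = 1"
    "gdist E u2 u3 = 1" "gdist E u3 u2 = 1" "gdist E u0 u2 = 2" "gdist E u2 u0 = 2"
    "gdist E u1 u3 = 2" "gdist E u3 u1 = 2" "gdist E u0 u3 = 3" "gdist E u3 u0 = 3"
    using d01 d12 d02 u1 u2 u03 gdist_sym by auto
  have dist: "u0 \<noteq> u1" "u0 \<noteq> u2" "u0 \<noteq> u3" "u1 \<noteq> u2" "u1 \<noteq> u3" "u2 \<noteq> u3"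
    using dd(1,7,11,3,9,5) by auto
  define R where "R = V - {u0,u1,u2,u3}"
  have RV: "R \<subseteq> V" unfolding R_def by auto
  have cardR: "card R = card V - 4"
    unfolding R_def using finV dist u1 u2 u03 by (subst card_Diff_subset) auto
  have dR: "r \<in> V \<and> r \<noteq> u0 \<and> r \<noteq> u1 \<and> r \<noteq> u2 \<and> r \<noteq> u3" if "r \<in> R" for r
    using that unfolding R_def by auto
  have VR: "w \<in> R" if "w \<in> V" "w \<noteq> u0" "w \<noteq> u1" "w \<noteq> u2" "w \<noteq> u3" for w
    using that unfolding R_def by auto
  have uV: "u0 \<in> V" "u1 \<in> V" "u2 \<in> V" "u3 \<in> V" using u03 u1 u2 by auto
  show ?thesis
  proof (rule ccontr)
    assume neg: "\<not> partition_dim V E \<le> card V - 3"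
    have C1: "gdist E x w = gdist E y w"
      if xy: "x \<in> R" "y \<in> R" "x \<noteq> y" "w \<in> V" "w \<notin> {u1,u2,u3,x,y}" for x y w
    proof (rule ccontr)
      assume ne: "gdist E x w \<noteq> gdist E y w"
      let ?Q = "{{u1,u2,u3},{x,y}}"
      have U: "\<Union>?Q = {u1,u2,u3,x,y}" by auto
      have "partition_dim V E \<le> card ?Q + card (V - \<Union>?Q)"
      proof (rule loc_part)
        fix C assume "C \<in> ?Q" then show "C \<subseteq> V \<and> C \<noteq> {}" using uV dR[OF xy(1)] dR[OF xy(2)] xy by auto
      next
        fix C C' assume "C \<in> ?Q" "C' \<in> ?Q" "C \<noteq> C'" then show "C \<inter> C' = {}" using dR[OF xy(1)] dR[OF xy(2)] xy by auto
      next
        fix C a b assume C: "C \<in> ?Q" "a \<in> C" "b \<in> C" "a \<noteq> b"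
        have u0o: "u0 \<in> V - \<Union>?Q" using uV dist dR[OF xy(1)] dR[OF xy(2)] xy by auto
        have wo: "w \<in> V - \<Union>?Q" using xy by auto
        show "\<exists>w\<in>V - \<Union>?Q. gdist E a w \<noteq> gdist E b w"
        proof (cases "C = {x,y}")
          case True
          then show ?thesis using C ne wo by (intro bexI[of _ w]) auto
        next
          case False
          then have "C = {u1,u2,u3}" using C by auto
          then show ?thesis using C dd by (intro bexI[of _ u0] u0o) auto
        qed
      qed
      moreover have "card ?Q \<le> 2" by (simp add: card_insert_if)
      moreover have "card (V - \<Union>?Q) = card V - 5"
        unfolding U using finV uV dR[OF xy(1)] dR[OF xy(2)] xy dist by (subst card_Diff_subset) auto
      ultimately show False using neg n9 by linarith
    qed
    have C2: "gdist E x w = gdist E y w"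
      if xy: "x \<in> R" "y \<in> R" "x \<noteq> y" "w \<in> V" "w \<notin> {u0,u1,u2,x,y}" for x y w
    proof (rule ccontr)
      assume ne: "gdist E x w \<noteq> gdist E y w"
      let ?Q = "{{u0,u1,u2},{x,y}}"
      have U: "\<Union>?Q = {u0,u1,u2,x,y}" by auto
      have "partition_dim V E \<le> card ?Q + card (V - \<Union>?Q)"
      proof (rule loc_part)
        fix C assume "C \<in> ?Q" then show "C \<subseteq> V \<and> C \<noteq> {}" using uV dR[OF xy(1)] dR[OF xy(2)] xy by auto
      next
        fix C C' assume "C \<in> ?Q" "C' \<in> ?Q" "C \<noteq> C'" then show "C \<inter> C' = {}" using dR[OF xy(1)] dR[OF xy(2)] xy by auto
      next
        fix C a b assume C: "C \<in> ?Q" "a \<in> C" "b \<in> C" "a \<noteq> b"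
        have u3o: "u3 \<in> V - \<Union>?Q" using uV dist dR[OF xy(1)] dR[OF xy(2)] xy by auto
        have wo: "w \<in> V - \<Union>?Q" using xy by auto
        show "\<exists>w\<in>V - \<Union>?Q. gdist E a w \<noteq> gdist E b w"
        proof (cases "C = {x,y}")
          case True
          then show ?thesis using C ne wo by (intro bexI[of _ w]) auto
        next
          case False
          then have "C = {u0,u1,u2}" using C by auto
          then show ?thesis using C dd by (intro bexI[of _ u3] u3o) auto
        qed
      qed
      moreover have "card ?Q \<le> 2" by (simp add: card_insert_if)
      moreover have "card (V - \<Union>?Q) = card V - 5"
        unfolding U using finV uV dR[OF xy(1)] dR[OF xy(2)] xy dist by (subst card_Diff_subset) auto
      ultimately show False using neg n9 by linarith
    qed
    have C3: "gdist E w x = gdist E w u1"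
      if xy: "x \<in> R" "gdist E x u0 = 1" "w \<in> R" "w \<noteq> x" for x w
    proof (rule ccontr)
      assume ne: "gdist E w x \<noteq> gdist E w u1"
      let ?Q = "{{u1,u2,u3,x}}"
      have U: "\<Union>?Q = {u1,u2,u3,x}" by auto
      have "partition_dim V E \<le> card ?Q + card (V - \<Union>?Q)"
      proof (rule loc_part)
        fix C assume "C \<in> ?Q" then show "C \<subseteq> V \<and> C \<noteq> {}" using uV dR[OF xy(1)] dR[OF xy(3)] xy by auto
      next
        fix C C' assume "C \<in> ?Q" "C' \<in> ?Q" "C \<noteq> C'" then show "C \<inter> C' = {}" by auto
      next
        fix C a b assume C: "C \<in> ?Q" "a \<in> C" "b \<in> C" "a \<noteq> b"
        have u0o: "u0 \<in> V - \<Union>?Q" using uV dist dR[OF xy(1)] dR[OF xy(3)] xy by auto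
        have wo: "w \<in> V - \<Union>?Q" using xy dR by auto
        have ne': "gdist E x w \<noteq> gdist E u1 w" using ne gdist_sym dR[OF xy(1)] dR[OF xy(3)] xy uV by metis
        show "\<exists>w\<in>V - \<Union>?Q. gdist E a w \<noteq> gdist E b w"
        proof (cases "{a,b} = {x,u1}")
          case True
          then show ?thesis using C ne' wo by (intro bexI[of _ w]) (auto simp: doubleton_eq_iff)
        next
          case False
          then show ?thesis using C dd xy by (intro bexI[of _ u0] u0o) auto
        qed
      qed
      moreover have "card (V - \<Union>?Q) = card V - 4"
        unfolding U using finV uV dR[OF xy(1)] dR[OF xy(3)] xy dist by (subst card_Diff_subset) auto
      ultimately show False using neg n9 by simp
    qed
    have C4: "gdist E w x = gdist E w u2"
      if xy: "x \<in> R" "gdist E x u3 = 1" "w \<in> R" "w \<noteq> x" for x w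
    proof (rule ccontr)
      assume ne: "gdist E w x \<noteq> gdist E w u2"
      let ?Q = "{{u0,u1,u2,x}}"
      have U: "\<Union>?Q = {u0,u1,u2,x}" by auto
      have "partition_dim V E \<le> card ?Q + card (V - \<Union>?Q)"
      proof (rule loc_part)
        fix C assume "C \<in> ?Q" then show "C \<subseteq> V \<and> C \<noteq> {}" using uV dR[OF xy(1)] dR[OF xy(3)] xy by auto
      next
        fix C C' assume "C \<in> ?Q" "C' \<in> ?Q" "C \<noteq> C'" then show "C \<inter> C' = {}" by auto
      next
        fix C a b assume C: "C \<in> ?Q" "a \<in> C" "b \<in> C" "a \<noteq> b"
        have u3o: "u3 \<in> V - \<Union>?Q" using uV dist dR[OF xy(1)] dR[OF xy(3)] xy by auto
        have wo: "w \<in> V - \<Union>?Q" using xy dR by auto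
        have ne': "gdist E x w \<noteq> gdist E u2 w" using ne gdist_sym dR[OF xy(1)] dR[OF xy(3)] xy uV by metis
        show "\<exists>w\<in>V - \<Union>?Q. gdist E a w \<noteq> gdist E b w"
        proof (cases "{a,b} = {x,u2}")
          case True
          then show ?thesis using C ne' wo by (intro bexI[of _ w]) (auto simp: doubleton_eq_iff)
        next
          case False
          then show ?thesis using C dd xy by (intro bexI[of _ u3] u3o) auto
        qed
      qed
      moreover have "card (V - \<Union>?Q) = card V - 4"
        unfolding U using finV uV dR[OF xy(1)] dR[OF xy(3)] xy dist by (subst card_Diff_subset) auto
      ultimately show False using neg n9 by simp
    qed
    have same0: "gdist E x u0 = gdist E y u0" if "x \<in> R" "y \<in> R" for x y
      using C1[of x y u0] that dist dR[OF that(1)] dR[OF that(2)] uV by (cases "x = y") auto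
    have same3: "gdist E x u3 = gdist E y u3" if "x \<in> R" "y \<in> R" for x y
      using C2[of x y u3] that dist dR[OF that(1)] dR[OF that(2)] uV by (cases "x = y") auto
    have sameR: "gdist E x w = gdist E y w" if "x \<in> R" "y \<in> R" "w \<in> R" "w \<noteq> x" "w \<noteq> y" for x y w
      using C1[of x y w] that dR[OF that(3)] by (cases "x = y") auto
    have rng0: "1 \<le> gdist E r u0 \<and> gdist E r u0 \<le> 3" if "r \<in> R" for r
      using dR[OF that] gdist_0[of r u0] le3[of r u0] uV by (auto simp: Suc_le_eq)
    have rng3: "1 \<le> gdist E r u3 \<and> gdist E r u3 \<le> 3" if "r \<in> R" for r
      using dR[OF that] gdist_0[of r u3] le3[of r u3] uV by (auto simp: Suc_le_eq)
    have L2: "E r u1" if r: "r \<in> R" "gdist E r u0 = 2" for r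
    proof -
      obtain w where w: "w \<in> V" "E r w" "gdist E w u0 = 1"
        using gdist_step[of r u0 1] r dR[OF r(1)] uV by auto
      have "w \<notin> R" using same0[of w r] r w by auto
      then have "w = u0 \<or> w = u1 \<or> w = u2 \<or> w = u3" using VR w(1) by blast
      then show ?thesis using w dd by auto
    qed
    have L3: "\<not> E r u1" if r: "r \<in> R" "gdist E r u0 = 3" for r
    proof
      assume "E r u1"
      then have "gdist E r u1 = 1" using gdist_1 dR[OF r(1)] uV by blast
      then show False using gdist_tri[of r u1 u0] dR[OF r(1)] uV dd r by simp
    qed
    have L2': "E r u2" if r: "r \<in> R" "gdist E r u3 = 2" for r
    proof -
      obtain w where w: "w \<in> V" "E r w" "gdist E w u3 = 1"
        using gdist_step[of r u3 1] r dR[OF r(1)] uV by auto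
      have "w \<notin> R" using same3[of w r] r w by auto
      then have "w = u0 \<or> w = u1 \<or> w = u2 \<or> w = u3" using VR w(1) by blast
      then show ?thesis using w dd by auto
    qed
    have L3': "\<not> E r u2" if r: "r \<in> R" "gdist E r u3 = 3" for r
    proof
      assume "E r u2"
      then have "gdist E r u2 = 1" using gdist_1 dR[OF r(1)] uV by blast
      then show False using gdist_tri[of r u2 u3] dR[OF r(1)] uV dd r by simp
    qed
    have adj1: "E x u1 \<longleftrightarrow> E y u1" if xy: "x \<in> R" "y \<in> R" for x y
    proof (cases "x = y")
      case False
      have a: "gdist E x u0 = gdist E y u0" using same0 xy by blast
      consider "gdist E x u0 = 1" | "gdist E x u0 = 2" | "gdist E x u0 = 3" using rng0[OF xy(1)] by linarith
      then show ?thesis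
      proof cases
        case 1
        have "gdist E y x = gdist E y u1" using C3[of x y] xy 1 False by auto
        moreover have "gdist E x y = gdist E x u1" using C3[of y x] xy 1 a False by auto
        ultimately have "gdist E x u1 = gdist E y u1" using gdist_sym dR[OF xy(1)] dR[OF xy(2)] by metis
        then show ?thesis using gdist_1 dR[OF xy(1)] dR[OF xy(2)] uV by metis
      next
        case 2 then show ?thesis using L2 a xy by metis
      next
        case 3 then show ?thesis using L3 a xy by metis
      qed
    qed simp
    have adj2: "E x u2 \<longleftrightarrow> E y u2" if xy: "x \<in> R" "y \<in> R" for x y
    proof (cases "x = y")
      case False
      have a: "gdist E x u3 = gdist E y u3" using same3 xy by blast
      consider "gdist E x u3 = 1" | "gdist E x u3 = 2" | "gdist E x u3 = 3" using rng3[OF xy(1)] by linarith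
      then show ?thesis
      proof cases
        case 1
        have "gdist E y x = gdist E y u2" using C4[of x y] xy 1 False by auto
        moreover have "gdist E x y = gdist E x u2" using C4[of y x] xy 1 a False by auto
        ultimately have "gdist E x u2 = gdist E y u2" using gdist_sym dR[OF xy(1)] dR[OF xy(2)] by metis
        then show ?thesis using gdist_1 dR[OF xy(1)] dR[OF xy(2)] uV by metis
      next
        case 2 then show ?thesis using L2' a xy by metis
      next
        case 3 then show ?thesis using L3' a xy by metis
      qed
    qed simp
    have adjw: "E x w \<longleftrightarrow> E y w" if xy: "x \<in> R" "y \<in> R" "w \<noteq> x" "w \<noteq> y" for x y w
    proof (cases "w \<in> V")
      case False
      then show ?thesis using sg unfolding simple_graph_def by blast
    next
      case True
      have xV: "x \<in> V" "y \<in> V" using dR xy by auto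
      show ?thesis
      proof (cases "w \<in> R")
        case True
        then show ?thesis using sameR[of x y w] xy gdist_1 xV RV by (metis subsetD)
      next
        case False
        then have "w = u0 \<or> w = u1 \<or> w = u2 \<or> w = u3" using VR \<open>w \<in> V\<close> by blast
        then show ?thesis
        proof (elim disjE)
          assume "w = u0" then show ?thesis using same0[OF xy(1,2)] gdist_1 xV uV by metis
        next
          assume "w = u1" then show ?thesis using adj1[OF xy(1,2)] by simp
        next
          assume "w = u2" then show ?thesis using adj2[OF xy(1,2)] by simp
        next
          assume "w = u3" then show ?thesis using same3[OF xy(1,2)] gdist_1 xV uV by metis
        qed
      qed
    qed
    have twR: "twins E x y" if "x \<in> R" "y \<in> R" for x y
    proof -
      have irr: "\<And>u. \<not> E u u" using sg unfolding simple_graph_def by blast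
      show ?thesis unfolding twins_def nbhd_def using adjw[OF that] irr by (auto, metis+)
    qed
    have "card R \<ge> 5" using cardR n9 by simp
    then obtain x0 where x0: "x0 \<in> R" by (metis card.empty empty_iff le_zero_eq not_numeral_le_zero ex_in_conv)
    have "card R \<le> twin_number V E" using twin_le[of x0 R] x0 twR RV by blast
    then have "real (card V - 4) \<le> real (card V) / 2" using tw cardR by linarith
    then show False using n9 by (simp add: of_nat_diff)
  qed
qed
end
theorem proposition12:
  fixes V :: "'a set" and E :: "'a \<Rightarrow> 'a \<Rightarrow> bool"
  assumes "simple_graph V E" and "connected_graph V E"
    and "card V \<ge> 9"
    and "real (twin_number V E) \<le> real (card V) / 2"
    and "diam V E = 3"
  shows "partition_dim V E \<le> card V - 3"
  using main[OF assms] .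

end
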